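(* Let $p>1$ and let $\{(x_i,y_i)\}_{i=1}^n\subset\mathbb{R}^d\times\{\pm1\}$ be linearly separable with $\max_i\|x_i\|_q<C$ for some constant $C$, where $1/p+1/q=1$. Let $L(w)=\frac1n\sum_{i=1}^n\ell(y_i\langle w,x_i\rangle)$ with $\ell$ decreasing, convex, not attaining its minimum, $\inf\ell=0$, and suppose $\ell$ has an exponential tail: $\lim_{z\to\infty}\ell(z)e^{az}=b$ for some constants $a>0$, $b>0$. Then the regularized direction $\bar w^{\mathrm{reg}}_p$ with respect to the $\ell_p$-norm exists and equals the max-margin direction $\bar w^{\mathrm{mm}}_p$.
   Context: The regularization path is $\bar w_p(B)=\arg\min_{\|w\|_p\le B}L(w)$; if $\lim_{B\to\infty}\bar w_p(B)/B$ exists it is the regularized direction $\bar w^{\mathrm{reg}}_p$. The margin of $w$ is $\gamma(w)=\min_i y_i\langle x_i,w\rangle$, and the max-margin direction is $\bar w^{\mathrm{mm}}_p=\arg\max_{\|w\|_p\le1}\min_{i}y_i\langle x_i,w\rangle$. Linear separability means there is $w^*$ with $\mathrm{sign}(\langle w^*,x_i\rangle)=y_i$ for all $i$. *)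

theory Defs
  imports "HOL-Analysis.Analysis"
begin

definition lpnorm :: "real \<Rightarrow> real^'d \<Rightarrow> real" where
  "lpnorm p w = (\<Sum>i\<in>UNIV. \<bar>w $ i\<bar> powr p) powr (1 / p)"

definition emp_loss :: "(real \<Rightarrow> real) \<Rightarrow> nat \<Rightarrow> (nat \<Rightarrow> real^'d) \<Rightarrow> (nat \<Rightarrow> real)
    \<Rightarrow> real^'d \<Rightarrow> real" where
  "emp_loss loss n x y w = (1 / real n) * (\<Sum>i<n. loss (y i * (w \<bullet> x i)))"

definition margin :: "nat \<Rightarrow> (nat \<Rightarrow> real^'d) \<Rightarrow> (nat \<Rightarrow> real) \<Rightarrow> real^'d \<Rightarrow> real" where
  "margin n x y w = Min ((\<lambda>i. y i * (x i \<bullet> w)) ` {..<n})"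

definition linearly_separable :: "nat \<Rightarrow> (nat \<Rightarrow> real^'d) \<Rightarrow> (nat \<Rightarrow> real) \<Rightarrow> bool" where
  "linearly_separable n x y \<longleftrightarrow> (\<exists>w. \<forall>i<n. sgn (w \<bullet> x i) = y i)"

definition is_reg_min :: "real \<Rightarrow> (real^'d \<Rightarrow> real) \<Rightarrow> real \<Rightarrow> real^'d \<Rightarrow> bool" where
  "is_reg_min p L B w \<longleftrightarrow> lpnorm p w \<le> B \<and> (\<forall>v. lpnorm p v \<le> B \<longrightarrow> L w \<le> L v)"

definition is_max_margin :: "real \<Rightarrow> nat \<Rightarrow> (nat \<Rightarrow> real^'d) \<Rightarrow> (nat \<Rightarrow> real) \<Rightarrow> real^'d \<Rightarrow> bool" where
  "is_max_margin p n x y u \<longleftrightarrow> lpnorm p u \<le> 1 \<and>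
     (\<forall>w. lpnorm p w \<le> 1 \<longrightarrow> margin n x y w \<le> margin n x y u)"

end

theory Submission
  imports Defs
begin


definition Sp :: "real \<Rightarrow> real^'d \<Rightarrow> real" where
  "Sp p w = (\<Sum>i\<in>UNIV. \<bar>w $ i\<bar> powr p)"

lemma Sp_nonneg: "Sp p w \<ge> 0"
  unfolding Sp_def by (intro sum_nonneg) auto

lemma lpnorm_Sp: "lpnorm p w = Sp p w powr (1/p)"
  unfolding lpnorm_def Sp_def by simp

lemma lpnorm_nonneg: "lpnorm p w \<ge> 0"
  unfolding lpnorm_def by simp

lemma lpnorm_powr: assumes "p > 0" shows "lpnorm p w powr p = Sp p w"
  using assms Sp_nonneg[of p w] by (simp add: lpnorm_Sp powr_powr)

lemma lpnorm_le_iff: assumes "p > 0" "B \<ge> 0"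
  shows "lpnorm p w \<le> B \<longleftrightarrow> Sp p w \<le> B powr p"
proof
  assume "lpnorm p w \<le> B"
  then have "lpnorm p w powr p \<le> B powr p"
    using assms by (intro powr_mono2) (auto simp: lpnorm_nonneg)
  then show "Sp p w \<le> B powr p" using lpnorm_powr[OF assms(1), of w] by simp
next
  assume h: "Sp p w \<le> B powr p"
  have "lpnorm p w = Sp p w powr (1/p)" by (rule lpnorm_Sp)
  also have "\<dots> \<le> (B powr p) powr (1/p)"
    using assms h by (intro powr_mono2) (auto simp: Sp_nonneg)
  also have "\<dots> = B" using assms by (simp add: powr_powr)
  finally show "lpnorm p w \<le> B" .
qed

lemma lpnorm_less_one: assumes "p > 0" "Sp p w < 1" shows "lpnorm p w < 1"
proof -
  have "lpnorm p w = Sp p w powr (1/p)" by (rule lpnorm_Sp)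
  also have "\<dots> < 1 powr (1/p)"
    using assms by (intro powr_less_mono2) (auto simp: Sp_nonneg)
  finally show ?thesis by simp
qed

lemma comp_le_lpnorm: assumes "p > 0" shows "\<bar>w $ i\<bar> \<le> lpnorm p w"
proof -
  have "\<bar>w $ i\<bar> powr p \<le> Sp p w"
    unfolding Sp_def by (rule member_le_sum) auto
  then have "(\<bar>w $ i\<bar> powr p) powr (1/p) \<le> Sp p w powr (1/p)"
    using assms by (intro powr_mono2) auto
  then show ?thesis using assms by (simp add: powr_powr lpnorm_Sp)
qed

lemma lpnorm_zero_iff: assumes "p > 0" shows "lpnorm p w = 0 \<longleftrightarrow> w = 0"
proof
  assume h: "lpnorm p w = 0"
  show "w = 0"
  proof (rule vec_eq_iff[THEN iffD2], intro allI)
    fix i show "w $ i = 0 $ i" using comp_le_lpnorm[OF assms, of w i] h by simp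
  qed
next
  assume "w = 0" then show "lpnorm p w = 0" using assms by (simp add: lpnorm_def)
qed

lemma lpnorm_scale: assumes "p > 0" shows "lpnorm p (c *\<^sub>R w) = \<bar>c\<bar> * lpnorm p w"
proof -
  have "Sp p (c *\<^sub>R w) = \<bar>c\<bar> powr p * Sp p w"
    unfolding Sp_def by (simp add: abs_mult powr_mult sum_distrib_left)
  then have "lpnorm p (c *\<^sub>R w) = (\<bar>c\<bar> powr p * Sp p w) powr (1/p)"
    by (simp add: lpnorm_Sp)
  also have "\<dots> = (\<bar>c\<bar> powr p) powr (1/p) * Sp p w powr (1/p)"
    using powr_mult[of "\<bar>c\<bar> powr p" "Sp p w" "1/p"] by (simp add: Sp_nonneg)
  also have "\<dots> = \<bar>c\<bar> * lpnorm p w" using assms by (simp add: powr_powr lpnorm_Sp)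
  finally show ?thesis .
qed

lemma cont_Sp: assumes "p > 0" shows "continuous_on UNIV (Sp p)"
  unfolding Sp_def using assms
  by (intro continuous_on_sum continuous_on_powr' continuous_intros) auto

lemma cont_lpnorm: assumes "p > 0" shows "continuous_on UNIV (lpnorm p)"
  unfolding lpnorm_Sp[abs_def] using assms Sp_nonneg
  by (intro continuous_on_powr' cont_Sp continuous_intros) auto

lemma compact_ball_lp: assumes "p > 0" shows "compact {w::real^'d. lpnorm p w \<le> B}"
proof (subst compact_eq_bounded_closed, rule conjI)
  show "bounded {w::real^'d. lpnorm p w \<le> B}"
  proof (rule boundedI)
    fix w :: "real^'d" assume "w \<in> {w. lpnorm p w \<le> B}"
    then have "\<And>i. \<bar>w $ i\<bar> \<le> B" using comp_le_lpnorm[OF assms, of w] by (meson mem_Collect_eq order_trans)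
    then have "(\<Sum>i\<in>UNIV. \<bar>w $ i\<bar>) \<le> (\<Sum>i\<in>(UNIV::'d set). B)" by (intro sum_mono) auto
    then show "norm w \<le> real CARD('d) * B" using norm_le_l1_cart[of w] by simp
  qed
  show "closed {w::real^'d. lpnorm p w \<le> B}"
    using cont_lpnorm[OF assms] by (intro closed_Collect_le continuous_intros) auto
qed



lemma powr_mvt:
  fixes p a b :: real
  assumes "p > 0" "0 \<le> a" "a < b"
  shows "\<exists>z. a < z \<and> z < b \<and> b powr p - a powr p = (b - a) * (p * z powr (p - 1))"
proof -
  have "continuous_on {a..b} (\<lambda>t. t powr p)"
    using assms by (intro continuous_on_powr' continuous_intros) auto
  moreover have "\<And>t. a < t \<Longrightarrow> t < b \<Longrightarrow> (\<lambda>t. t powr p) differentiable (at t)"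
  proof -
    fix t assume "a < t" "t < b"
    then have "t > 0" using assms by simp
    then show "(\<lambda>t. t powr p) differentiable (at t)"
      using has_real_derivative_powr[of t p] real_differentiable_def by blast
  qed
  ultimately obtain l z where z: "a < z" "z < b" "DERIV (\<lambda>t. t powr p) z :> l"
      "b powr p - a powr p = (b - a) * l"
    using MVT[OF assms(3)] by blast
  have "DERIV (\<lambda>t. t powr p) z :> p * z powr (p - 1)"
    using z assms by (intro has_real_derivative_powr) auto
  then have "l = p * z powr (p - 1)" using z(3) DERIV_unique by blast
  then show ?thesis using z by blast
qed

lemma powr_mid_strict:
  fixes p x y :: real
  assumes "p > 1" "0 \<le> x" "x < y"
  shows "((x + y) / 2) powr p < (x powr p + y powr p) / 2"
proof -
  define m where "m = (x + y) / 2"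
  have m: "x < m" "m < y" using assms by (auto simp: m_def)
  obtain z1 where z1: "x < z1" "z1 < m" "m powr p - x powr p = (m - x) * (p * z1 powr (p - 1))"
    using powr_mvt[of p x m] assms m by auto
  obtain z2 where z2: "m < z2" "z2 < y" "y powr p - m powr p = (y - m) * (p * z2 powr (p - 1))"
    using powr_mvt[of p m y] assms m by auto
  have "z1 powr (p - 1) < z2 powr (p - 1)"
    using assms z1 z2 by (intro powr_less_mono2) auto
  then have "p * z1 powr (p - 1) < p * z2 powr (p - 1)" using assms by simp
  moreover have "m - x = y - m" "m - x > 0" using m by (auto simp: m_def field_simps)
  ultimately have "(m - x) * (p * z1 powr (p - 1)) < (y - m) * (p * z2 powr (p - 1))"
    by (metis mult_strict_left_mono)
  then have "m powr p - x powr p < y powr p - m powr p"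
    using z1 z2 by simp
  then show ?thesis unfolding m_def[symmetric] by simp
qed

lemma abs_powr_mid:
  fixes p s t :: real
  assumes "p > 1"
  shows "\<bar>(s + t) / 2\<bar> powr p \<le> (\<bar>s\<bar> powr p + \<bar>t\<bar> powr p) / 2"
    and "s \<noteq> t \<Longrightarrow> \<bar>(s + t) / 2\<bar> powr p < (\<bar>s\<bar> powr p + \<bar>t\<bar> powr p) / 2"
proof -
  have A: "\<bar>(s + t) / 2\<bar> powr p \<le> ((\<bar>s\<bar> + \<bar>t\<bar>) / 2) powr p"
    using assms by (intro powr_mono2) auto
  have main: "\<bar>(s + t) / 2\<bar> powr p < (\<bar>s\<bar> powr p + \<bar>t\<bar> powr p) / 2"
    if "\<bar>s\<bar> \<noteq> \<bar>t\<bar>"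
  proof (cases "\<bar>s\<bar> < \<bar>t\<bar>")
    case True
    then show ?thesis using A powr_mid_strict[OF assms, of "\<bar>s\<bar>" "\<bar>t\<bar>"] by simp
  next
    case False
    then have "\<bar>t\<bar> < \<bar>s\<bar>" using that by simp
    then show ?thesis using A powr_mid_strict[OF assms, of "\<bar>t\<bar>" "\<bar>s\<bar>"] by (simp add: add.commute)
  qed
  have eq: "\<bar>(s + t) / 2\<bar> powr p \<le> (\<bar>s\<bar> powr p + \<bar>t\<bar> powr p) / 2"
    if "\<bar>s\<bar> = \<bar>t\<bar>"
  proof -
    have "\<bar>(s + t) / 2\<bar> \<le> \<bar>t\<bar>" using that by simp
    then have "\<bar>(s + t) / 2\<bar> powr p \<le> \<bar>t\<bar> powr p" using assms by (intro powr_mono2) auto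
    then show ?thesis using that by simp
  qed
  show "\<bar>(s + t) / 2\<bar> powr p \<le> (\<bar>s\<bar> powr p + \<bar>t\<bar> powr p) / 2"
    using main eq by (cases "\<bar>s\<bar> = \<bar>t\<bar>") force+
  show "\<bar>(s + t) / 2\<bar> powr p < (\<bar>s\<bar> powr p + \<bar>t\<bar> powr p) / 2" if "s \<noteq> t"
  proof (cases "\<bar>s\<bar> = \<bar>t\<bar>")
    case True
    then have "s = - t" "t \<noteq> 0" using that by (auto simp: abs_eq_iff)
    then show ?thesis by simp
  next
    case False then show ?thesis using main by blast
  qed
qed

lemma Sp_mid_strict:
  fixes u v :: "real^'d"
  assumes "p > 1" "u \<noteq> v"
  shows "Sp p ((1/2) *\<^sub>R (u + v)) < (Sp p u + Sp p v) / 2"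
proof -
  obtain j where j: "u $ j \<noteq> v $ j" using assms(2) by (auto simp: vec_eq_iff)
  have "Sp p ((1/2) *\<^sub>R (u + v)) = (\<Sum>i\<in>UNIV. \<bar>(u $ i + v $ i) / 2\<bar> powr p)"
    unfolding Sp_def by simp
  also have "\<dots> < (\<Sum>i\<in>UNIV. (\<bar>u $ i\<bar> powr p + \<bar>v $ i\<bar> powr p) / 2)"
  proof (rule sum_strict_mono_ex1)
    show "\<forall>i\<in>UNIV. \<bar>(u $ i + v $ i) / 2\<bar> powr p \<le> (\<bar>u $ i\<bar> powr p + \<bar>v $ i\<bar> powr p) / 2"
      using abs_powr_mid(1)[OF assms(1)] by blast
    show "\<exists>i\<in>UNIV. \<bar>(u $ i + v $ i) / 2\<bar> powr p < (\<bar>u $ i\<bar> powr p + \<bar>v $ i\<bar> powr p) / 2"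
      using abs_powr_mid(2)[OF assms(1) j] by blast
  qed simp
  also have "\<dots> = (Sp p u + Sp p v) / 2"
    unfolding Sp_def by (simp add: sum.distrib flip: sum_divide_distrib)
  finally show ?thesis .
qed



lemma continuous_on_Min_family:
  fixes f :: "'i \<Rightarrow> 'a::topological_space \<Rightarrow> real"
  assumes "finite I" "I \<noteq> {}" "\<And>i. i \<in> I \<Longrightarrow> continuous_on S (f i)"
  shows "continuous_on S (\<lambda>w. Min ((\<lambda>i. f i w) ` I))"
  using assms
proof (induction I rule: finite_ne_induct)
  case (singleton i) then show ?case by simp
next
  case (insert i F)
  have "(\<lambda>w. Min ((\<lambda>i. f i w) ` insert i F)) = (\<lambda>w. min (f i w) (Min ((\<lambda>i. f i w) ` F)))"
    using insert by (auto simp: Min_insert)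
  then show ?case using insert by (auto intro!: continuous_on_min)
qed

context
  fixes n :: nat and x :: "nat \<Rightarrow> real^'d" and y :: "nat \<Rightarrow> real"
  assumes npos: "n > 0"
begin

lemma margin_le: "i < n \<Longrightarrow> margin n x y w \<le> y i * (x i \<bullet> w)"
  unfolding margin_def by (rule Min_le) auto

lemma margin_attained: "\<exists>i<n. margin n x y w = y i * (x i \<bullet> w)"
proof -
  have "margin n x y w \<in> (\<lambda>i. y i * (x i \<bullet> w)) ` {..<n}"
    unfolding margin_def using npos by (intro Min_in) auto
  then show ?thesis by auto
qed

lemma margin_scale: assumes "c \<ge> 0" shows "margin n x y (c *\<^sub>R w) = c * margin n x y w"
proof (rule antisym)
  obtain i where i: "i < n" "margin n x y w = y i * (x i \<bullet> w)" using margin_attained by blast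
  have "margin n x y (c *\<^sub>R w) \<le> y i * (x i \<bullet> (c *\<^sub>R w))" by (rule margin_le[OF i(1)])
  then show "margin n x y (c *\<^sub>R w) \<le> c * margin n x y w" using i by (simp add: algebra_simps)
  obtain j where j: "j < n" "margin n x y (c *\<^sub>R w) = y j * (x j \<bullet> (c *\<^sub>R w))"
    using margin_attained by blast
  have "c * margin n x y w \<le> c * (y j * (x j \<bullet> w))"
    using margin_le[OF j(1)] assms by (intro mult_left_mono) auto
  then show "c * margin n x y w \<le> margin n x y (c *\<^sub>R w)" using j by (simp add: algebra_simps)
qed

lemma margin_add: "margin n x y u + margin n x y v \<le> margin n x y (u + v)"
proof -
  obtain j where j: "j < n" "margin n x y (u + v) = y j * (x j \<bullet> (u + v))"
    using margin_attained by blast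
  show ?thesis using j margin_le[OF j(1), of u] margin_le[OF j(1), of v]
    by (simp add: algebra_simps inner_add_right)
qed

lemma margin_zero: "margin n x y 0 = 0"
  using margin_scale[of 0 0] by simp

lemma cont_margin: "continuous_on UNIV (margin n x y)"
  unfolding margin_def[abs_def] using npos
  by (intro continuous_on_Min_family continuous_intros) auto

end

lemma loss_pos:
  fixes loss :: "real \<Rightarrow> real"
  assumes decr: "antimono loss" and b: "b > 0"
    and tail: "((\<lambda>z. loss z * exp (a * z)) \<longlongrightarrow> b) at_top"
  shows "loss z > 0"
proof -
  have "eventually (\<lambda>t. loss t * exp (a * t) > 0) at_top"
    using order_tendstoD(1)[OF tail b] .
  then obtain N where N: "\<And>t. t \<ge> N \<Longrightarrow> loss t * exp (a * t) > 0"
    by (auto simp: eventually_at_top_linorder)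
  have "loss (max z N) * exp (a * max z N) > 0" using N by simp
  then have "loss (max z N) > 0" by (simp add: zero_less_mult_iff)
  moreover have "loss (max z N) \<le> loss z" using decr by (simp add: antimonoD)
  ultimately show ?thesis by simp
qed

lemma loss_tail_compare:
  fixes loss :: "real \<Rightarrow> real"
  assumes a: "a > 0" and b: "b > 0"
    and tail: "((\<lambda>z. loss z * exp (a * z)) \<longlongrightarrow> b) at_top"
    and g: "0 < g1" "g1 < g2" and N: "N > 0"
  shows "eventually (\<lambda>B. N * loss (B * g2) < loss (B * g1)) at_top"
proof -
  have ev1: "eventually (\<lambda>t. loss t * exp (a * t) > b / 2) at_top"
    using order_tendstoD(1)[OF tail, of "b/2"] b by simp
  have ev2: "eventually (\<lambda>t. loss t * exp (a * t) < 2 * b) at_top"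
    using order_tendstoD(2)[OF tail, of "2*b"] b by simp
  have lim1: "filterlim (\<lambda>B. B * g1) at_top at_top"
    using g by (intro filterlim_at_top_mult_tendsto_pos[OF tendsto_const] filterlim_ident) auto
  have lim2: "filterlim (\<lambda>B. B * g2) at_top at_top"
    using g by (intro filterlim_at_top_mult_tendsto_pos[OF tendsto_const] filterlim_ident) auto
  have e1: "eventually (\<lambda>B. loss (B * g1) * exp (a * (B * g1)) > b / 2) at_top"
    using filterlim_iff[THEN iffD1, OF lim1] ev1 by blast
  have e2: "eventually (\<lambda>B. loss (B * g2) * exp (a * (B * g2)) < 2 * b) at_top"
    using filterlim_iff[THEN iffD1, OF lim2] ev2 by blast
  have e3: "eventually (\<lambda>B. B \<ge> ln (4 * N) / (a * (g2 - g1))) at_top"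
    by (rule eventually_ge_at_top)
  show ?thesis
    using e1 e2 e3
  proof eventually_elim
    case (elim B)
    have pos: "a * (g2 - g1) > 0" using a g by simp
    have "ln (4 * N) \<le> B * (a * (g2 - g1))"
      using elim(3) pos by (simp add: divide_le_eq)
    then have "4 * N \<le> exp (B * (a * (g2 - g1)))"
      using N by (metis exp_le_cancel_iff exp_ln mult_pos_pos zero_less_numeral)
    also have "exp (B * (a * (g2 - g1))) = exp (a * (B * g2)) / exp (a * (B * g1))"
      by (simp add: algebra_simps flip: exp_diff)
    finally have X: "4 * N * exp (a * (B * g1)) \<le> exp (a * (B * g2))"
      by (simp add: field_simps)
    have l2: "loss (B * g2) < 2 * b / exp (a * (B * g2))"
      using elim(2) by (simp add: field_simps)
    have l1: "b / 2 / exp (a * (B * g1)) < loss (B * g1)"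
      using elim(1) by (simp add: field_simps)
    have "N * loss (B * g2) \<le> N * (2 * b / exp (a * (B * g2)))"
      using l2 N by (intro mult_left_mono) auto
    also have "\<dots> \<le> N * (2 * b / (4 * N * exp (a * (B * g1))))"
      using X N b by (intro mult_left_mono divide_left_mono) auto
    also have "\<dots> = b / 2 / exp (a * (B * g1))" using N by (simp add: field_simps)
    finally show ?case using l1 by simp
  qed
qed



theorem proposition1:
  fixes p q C a b :: real and n :: nat
    and x :: "nat \<Rightarrow> real^'d" and y :: "nat \<Rightarrow> real"
    and loss :: "real \<Rightarrow> real"
  assumes p_gt1: "p > 1"
    and conj: "1 / p + 1 / q = 1"
    and n_pos: "n > 0"
    and labels: "\<forall>i<n. y i = 1 \<or> y i = -1"
    and sep: "linearly_separable n x y"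
    and bounded: "\<forall>i<n. lpnorm q (x i) < C"
    and decr: "antimono loss"
    and cvx: "convex_on UNIV loss"
    and no_min: "\<forall>z. \<exists>z'. loss z' < loss z"
    and inf0: "(INF z. loss z) = 0"
    and a_pos: "a > 0" and b_pos: "b > 0"
    and tail: "((\<lambda>z. loss z * exp (a * z)) \<longlongrightarrow> b) at_top"
  shows "(\<exists>!u. is_max_margin p n x y u)
       \<and> (\<forall>B\<ge>0. \<exists>w. is_reg_min p (emp_loss loss n x y) B w)
       \<and> (\<forall>wbar :: real \<Rightarrow> real^'d.
            (\<forall>B>0. is_reg_min p (emp_loss loss n x y) B (wbar B)) \<longrightarrow>
            ((\<lambda>B. (1 / B) *\<^sub>R wbar B) \<longlongrightarrow> (THE u. is_max_margin p n x y u)) at_top)"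
proof -
  have p0: "p > 0" using p_gt1 by simp
  have lossp: "\<And>z. loss z > 0" using loss_pos[OF decr b_pos tail] .
  have contloss: "continuous_on UNIV loss"
    using convex_on_continuous[OF open_UNIV cvx] .
  let ?L = "emp_loss loss n x y"
  let ?m = "margin n x y"
  let ?U = "\<lambda>B. {w::real^'d. lpnorm p w \<le> B}"
  have contL: "continuous_on UNIV ?L"
    unfolding emp_loss_def[abs_def]
    by (intro continuous_intros continuous_on_compose2[OF contloss]) auto
  have contm: "continuous_on UNIV ?m" using cont_margin[OF n_pos] .
  have cptU: "compact (?U B)" for B using compact_ball_lp[OF p0] .
  have zeroU: "0 \<in> ?U B" if "B \<ge> 0" for B
    using that lpnorm_zero_iff[OF p0, of "0::real^'d"] by simp

  have part2: "\<forall>B\<ge>0. \<exists>w. is_reg_min p ?L B w"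
  proof (intro allI impI)
    fix B :: real assume B: "B \<ge> 0"
    have ne: "?U B \<noteq> {}" using zeroU[OF B] by blast
    have cs: "continuous_on (?U B) ?L" using continuous_on_subset[OF contL] by blast
    obtain w where "w \<in> ?U B" "\<forall>v\<in>?U B. ?L w \<le> ?L v"
      using continuous_attains_inf[OF cptU ne cs] by blast
    then show "\<exists>w. is_reg_min p ?L B w" unfolding is_reg_min_def by auto
  qed

  have ne1: "?U 1 \<noteq> {}" using zeroU[of 1] by force
  have cs1: "continuous_on (?U 1) ?m" using continuous_on_subset[OF contm] by blast
  obtain u0 where u0: "u0 \<in> ?U 1" "\<forall>w\<in>?U 1. ?m w \<le> ?m u0"
    using continuous_attains_sup[OF cptU ne1 cs1] by blast
  define g where "g = ?m u0"
  have mm_u0: "is_max_margin p n x y u0" using u0 unfolding is_max_margin_def by auto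
  have mm_iff: "is_max_margin p n x y u \<longleftrightarrow> lpnorm p u \<le> 1 \<and> ?m u = g" for u
    using u0 unfolding is_max_margin_def g_def by (auto intro: antisym)
  have mm_le: "lpnorm p w \<le> 1 \<Longrightarrow> ?m w \<le> g" for w using u0 by (auto simp: g_def)
  have gpos: "g > 0"
  proof -
    obtain ws where ws: "\<forall>i<n. sgn (ws \<bullet> x i) = y i"
      using sep unfolding linearly_separable_def by blast
    have pos: "y i * (x i \<bullet> ws) > 0" if "i < n" for i
    proof -
      have "sgn (ws \<bullet> x i) \<noteq> 0" using ws labels that by force
      then have nz: "ws \<bullet> x i \<noteq> 0" by auto
      have "y i * (x i \<bullet> ws) = sgn (ws \<bullet> x i) * (ws \<bullet> x i)"
        using ws that by (simp add: inner_commute)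
      also have "\<dots> = \<bar>ws \<bullet> x i\<bar>" by (simp add: abs_sgn)
      finally show ?thesis using nz by simp
    qed
    obtain i where i: "i < n" "?m ws = y i * (x i \<bullet> ws)"
      using margin_attained[where n=n and x=x and y=y, OF n_pos] by blast
    have mws: "?m ws > 0" using pos i by simp
    then have "ws \<noteq> 0" using margin_zero[where n=n and x=x and y=y, OF n_pos] by auto
    then have c: "lpnorm p ws > 0" using lpnorm_zero_iff[OF p0, of ws] lpnorm_nonneg[of p ws] by simp
    define v where "v = (1 / lpnorm p ws) *\<^sub>R ws"
    have "lpnorm p v = 1" using c by (simp add: v_def lpnorm_scale[OF p0])
    moreover have "?m v = ?m ws / lpnorm p ws"
      using c by (simp add: v_def margin_scale[where n=n and x=x and y=y, OF n_pos])
    ultimately have "?m v > 0" "?m v \<le> g" using mws c mm_le[of v] by auto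
    then show ?thesis by simp
  qed
  have norm1: "lpnorm p u = 1" if "is_max_margin p n x y u" for u
  proof (rule ccontr)
    assume ne: "lpnorm p u \<noteq> 1"
    have u: "lpnorm p u \<le> 1" "?m u = g" using that mm_iff by auto
    then have "u \<noteq> 0" using gpos margin_zero[where n=n and x=x and y=y, OF n_pos] by auto
    then have t: "lpnorm p u > 0" "lpnorm p u < 1"
      using lpnorm_zero_iff[OF p0, of u] lpnorm_nonneg[of p u] u ne by auto
    define v where "v = (1 / lpnorm p u) *\<^sub>R u"
    have "lpnorm p v = 1" using t by (simp add: v_def lpnorm_scale[OF p0])
    then have "?m v \<le> g" using mm_le by simp
    moreover have "?m v = g / lpnorm p u"
      using t u by (simp add: v_def margin_scale[where n=n and x=x and y=y, OF n_pos])
    moreover have "g / lpnorm p u > g" using t gpos by (simp add: less_divide_eq)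
    ultimately show False by simp
  qed
  have uniq: "u1 = u2" if "is_max_margin p n x y u1" "is_max_margin p n x y u2" for u1 u2
  proof (rule ccontr)
    assume ne: "u1 \<noteq> u2"
    define mid where "mid = (1/2) *\<^sub>R (u1 + u2)"
    have "Sp p u1 = 1" "Sp p u2 = 1"
      using norm1[OF that(1)] norm1[OF that(2)] lpnorm_powr[OF p0] by (metis powr_one_eq_one)+
    then have "Sp p mid < 1" using Sp_mid_strict[OF p_gt1 ne] by (simp add: mid_def)
    then have lt: "lpnorm p mid < 1" using lpnorm_less_one[OF p0] by blast
    have "?m mid = (1/2) * ?m (u1 + u2)" by (simp add: mid_def margin_scale[where n=n and x=x and y=y, OF n_pos])
    moreover have "?m u1 + ?m u2 \<le> ?m (u1 + u2)" by (rule margin_add[where n=n and x=x and y=y, OF n_pos])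
    ultimately have "?m mid \<ge> g" using that mm_iff by auto
    then have "is_max_margin p n x y mid" using lt mm_le mm_iff by (auto intro: antisym)
    then show False using norm1 lt by simp
  qed
  have part1: "\<exists>!u. is_max_margin p n x y u" using mm_u0 uniq by blast
  define u where "u = (THE u. is_max_margin p n x y u)"
  have mm_u: "is_max_margin p n x y u" unfolding u_def using theI'[OF part1] .
  have mu: "?m u = g" "lpnorm p u \<le> 1" using mm_u mm_iff by auto

  have part3: "((\<lambda>B. (1 / B) *\<^sub>R wbar B) \<longlongrightarrow> u) at_top"
    if H: "\<forall>B>0. is_reg_min p ?L B (wbar B)" for wbar :: "real \<Rightarrow> real^'d"
  proof (rule tendstoI)
    fix e :: real assume e: "e > 0"
    define K where "K = ?U 1 \<inter> {w. e \<le> dist w u}"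
    have cptK: "compact K" unfolding K_def
      by (intro compact_Int_closed cptU closed_Collect_le continuous_intros)
    have vU: "lpnorm p ((1 / B) *\<^sub>R wbar B) \<le> 1" if B: "B > 0" for B
    proof -
      have "lpnorm p (wbar B) \<le> B" using H B unfolding is_reg_min_def by auto
      then show ?thesis using B by (simp add: lpnorm_scale[OF p0] divide_le_eq)
    qed
    have notK: "eventually (\<lambda>B. (1 / B) *\<^sub>R wbar B \<notin> K) at_top"
    proof (cases "K = {}")
      case True then show ?thesis by simp
    next
      case False
      obtain k where k: "k \<in> K" "\<forall>w\<in>K. ?m w \<le> ?m k"
        using continuous_attains_sup[OF cptK False continuous_on_subset[OF contm]] by blast
      have "?m k < g"
      proof -
        have "?m k \<le> g" using k mm_le unfolding K_def by auto
        moreover have "?m k \<noteq> g"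
        proof
          assume "?m k = g"
          then have "is_max_margin p n x y k" using k mm_iff unfolding K_def by auto
          then have "k = u" using uniq mm_u by blast
          then show False using k e unfolding K_def by auto
        qed
        ultimately show ?thesis by simp
      qed
      define g1 where "g1 = max (?m k) (g / 2)"
      have g1: "0 < g1" "g1 < g" "?m k \<le> g1" using gpos \<open>?m k < g\<close> by (auto simp: g1_def)
      have ev: "eventually (\<lambda>B. real n * loss (B * g) < loss (B * g1)) at_top"
        using loss_tail_compare[OF a_pos b_pos tail g1(1) g1(2)] n_pos by simp
      show ?thesis using ev eventually_gt_at_top[of 0]
      proof eventually_elim
        case (elim B)
        show ?case
        proof
          assume inK: "(1 / B) *\<^sub>R wbar B \<in> K"
          have wB: "wbar B = B *\<^sub>R ((1 / B) *\<^sub>R wbar B)" using elim by simp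
          have "?m ((1 / B) *\<^sub>R wbar B) \<le> g1" using k inK g1 by force
          then have mw: "?m (wbar B) \<le> B * g1"
            using elim wB margin_scale[where n=n and x=x and y=y and c=B and w="(1 / B) *\<^sub>R wbar B", OF n_pos]
            by (metis less_eq_real_def mult_le_cancel_left_pos)
          obtain i where i: "i < n" "?m (wbar B) = y i * (x i \<bullet> wbar B)"
            using margin_attained[where n=n and x=x and y=y, OF n_pos] by blast
          have "loss (B * g1) \<le> loss (y i * (wbar B \<bullet> x i))"
            using mw i decr by (intro antimonoD[OF decr]) (simp add: inner_commute)
          also have "\<dots> \<le> (\<Sum>j<n. loss (y j * (wbar B \<bullet> x j)))"
            using i lossp by (intro member_le_sum[where f = "\<lambda>j. loss (y j * (wbar B \<bullet> x j))"])
              (auto intro: less_imp_le)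
          also have "\<dots> = real n * ?L (wbar B)" using n_pos by (simp add: emp_loss_def)
          also have "?L (wbar B) \<le> ?L (B *\<^sub>R u)"
          proof -
            have "lpnorm p (B *\<^sub>R u) \<le> B"
              using elim mu by (simp add: lpnorm_scale[OF p0] mult_le_cancel_left1)
            then show ?thesis using H elim unfolding is_reg_min_def by auto
          qed
          also have "?L (B *\<^sub>R u) \<le> loss (B * g)"
          proof -
            have "(\<Sum>j<n. loss (y j * ((B *\<^sub>R u) \<bullet> x j))) \<le> (\<Sum>j<n. loss (B * g))"
            proof (intro sum_mono antimonoD[OF decr])
              fix j assume "j \<in> {..<n}"
              then have "g \<le> y j * (x j \<bullet> u)" using margin_le[where n=n and x=x and y=y and i=j, OF n_pos] mu by auto
              then have "B * g \<le> B * (y j * (x j \<bullet> u))" using elim by simp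
              then show "B * g \<le> y j * ((B *\<^sub>R u) \<bullet> x j)" by (simp add: inner_commute algebra_simps)
            qed
            then show ?thesis using n_pos by (simp add: emp_loss_def divide_le_eq mult.commute)
          qed
          finally have "loss (B * g1) \<le> real n * loss (B * g)" using n_pos by simp
          then show False using elim by simp
        qed
      qed
    qed
    show "eventually (\<lambda>B. dist ((1 / B) *\<^sub>R wbar B) u < e) at_top"
      using notK eventually_gt_at_top[of 0]
    proof eventually_elim
      case (elim B)
      then show ?case using vU[OF elim(2)] unfolding K_def by auto
    qed
  qed
  show ?thesis using part1 part2 part3 unfolding u_def by blast
qed

end
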